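(* Let $n,m$ be positive integers, $A_1,\dots,A_m\in\mathbb{S}_n$, $\mathcal{A}(X)=(\langle A_i,X\rangle)_{i=1}^m$, $\mathcal{A}^*(y)=\sum_i y_iA_i$, with $\mathcal{A}\mathcal{A}^*$ invertible; let $b\in\mathbb{R}^m$, $C\in\mathbb{S}_n$, $D:=\mathcal{A}^*((\mathcal{A}\mathcal{A}^* )^{-1}b)$, $\mathcal{M}=\{S\in\mathbb{S}_n^+:\operatorname{diag}(S)=\mathbf{1}\}$, and $$L_\sigma(S,y,\widetilde{X})=\langle D,S+C\rangle-\langle\widetilde{X},\mathcal{A}^*(y)-S-C\rangle+\tfrac{\sigma}{2}\|\mathcal{A}^*(y)-S-C\|^2 .$$ Let $y^0\in\mathbb{R}^m$, $\widetilde{X}^0\in\mathbb{S}_n$, let $\sigma_k>0$ for all $k\ge0$, and for $k=0,1,2,\dots$ let $S^{k+1}\in\arg\min_{S\in\mathcal{M}}L_{\sigma_k}(S,y^k,\widetilde{X}^k)$, $y^{k+1}\in\arg\min_{y\in\mathbb{R}^m}L_{\sigma_k}(S^{k+1},y,\widetilde{X}^k)$, and $\widetilde{X}^{k+1}=\widetilde{X}^k-\sigma_k(\mathcal{A}^*(y^{k+1})-S^{k+1}-C)$. Then $\mathcal{A}(\widetilde{X}^{k+1})=0$ for every $k\ge0$. Moreover, for every $k\ge1$, the subproblem $\min_{y\in\mathbb{R}^m}L_{\sigma_k}(S^{k+1},y,\widetilde{X}^k)$ has the closed-form solution $y^{k+1}=(\mathcal{A}\mathcal{A}^* )^{-1}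\mathcal{A}(S^{k+1}+C)$.
   Context: $\mathbb{S}_n$ ($\mathbb{S}_n^+$) denotes real symmetric (positive semidefinite) $n\times n$ matrices, $\langle A,B\rangle=\mathrm{Tr}(A^{\intercal}B)$, $\|\cdot\|$ the Frobenius norm, $\operatorname{diag}(S)$ the vector of diagonal entries, $\mathbf{1}$ the all-ones vector. *)

theory Defs
  imports "HOL-Analysis.Analysis"
begin

definition symm :: "real^'n^'n \<Rightarrow> bool" where
  "symm X \<longleftrightarrow> transpose X = X"

definition psd :: "real^'n^'n \<Rightarrow> bool" where
  "psd X \<longleftrightarrow> symm X \<and> (\<forall>x. x \<bullet> (X *v x) \<ge> 0)"

definition minner :: "real^'n^'n \<Rightarrow> real^'n^'n \<Rightarrow> real" where
  "minner A B = (\<Sum>i\<in>UNIV. (transpose A ** B) $ i $ i)"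

definition fnorm :: "real^'n^'n \<Rightarrow> real" where
  "fnorm A = sqrt (minner A A)"

definition Aop :: "('m::finite \<Rightarrow> real^'n^'n) \<Rightarrow> real^'n^'n \<Rightarrow> real^'m" where
  "Aop As X = (\<chi> i. minner (As i) X)"

definition Aadj :: "('m::finite \<Rightarrow> real^'n^'n) \<Rightarrow> real^'m \<Rightarrow> real^'n^'n" where
  "Aadj As y = (\<Sum>i\<in>UNIV. (y $ i) *\<^sub>R As i)"

definition AAadj :: "('m::finite \<Rightarrow> real^'n^'n) \<Rightarrow> real^'m^'m" where
  "AAadj As = (\<chi> i j. minner (As i) (As j))"

definition elliptope :: "(real^'n^'n) set" where
  "elliptope = {S. psd S \<and> (\<forall>i. S $ i $ i = 1)}"

definition Lsig :: "('m::finite \<Rightarrow> real^'n^'n) \<Rightarrow> real^'m \<Rightarrow> real^'n^'n \<Rightarrow> real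
    \<Rightarrow> real^'n^'n \<Rightarrow> real^'m \<Rightarrow> real^'n^'n \<Rightarrow> real" where
  "Lsig As b C \<sigma> S y X =
     (let D = Aadj As (matrix_inv (AAadj As) *v b) in
      minner D (S + C) - minner X (Aadj As y - S - C)
      + \<sigma> / 2 * (fnorm (Aadj As y - S - C))\<^sup>2)"

end

theory Submission
  imports Defs
begin

lemma minner_inner: "minner A B = A \<bullet> B"
proof -
  have "minner A B = (\<Sum>i\<in>UNIV. \<Sum>k\<in>UNIV. A$k$i * B$k$i)"
    unfolding minner_def matrix_matrix_mult_def transpose_def by simp
  also have "\<dots> = (\<Sum>k\<in>UNIV. \<Sum>i\<in>UNIV. A$k$i * B$k$i)" by (rule sum.swap)
  also have "\<dots> = A \<bullet> B" unfolding inner_vec_def by simp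
  finally show ?thesis .
qed

lemma fnorm_sq: "(fnorm A)\<^sup>2 = A \<bullet> A"
  unfolding fnorm_def minner_inner by simp

lemma Aadj_add_axis: "Aadj As (y + t *\<^sub>R axis i 1) = Aadj As y + t *\<^sub>R As i"
proof -
  have "Aadj As (y + t *\<^sub>R axis i 1) = (\<Sum>j\<in>UNIV. (y $ j) *\<^sub>R As j + (if j = i then t else 0) *\<^sub>R As j)"
    unfolding Aadj_def by (intro sum.cong) (auto simp: axis_def scaleR_add_left)
  also have "\<dots> = Aadj As y + t *\<^sub>R As i"
  proof -
    have "(\<lambda>j. (if j = i then t else 0) *\<^sub>R As j) = (\<lambda>j. if j = i then t *\<^sub>R As i else 0)"
      by auto
    then show ?thesis unfolding Aadj_def sum.distrib by (simp only: sum.delta finite UNIV_I if_True)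
  qed
  finally show ?thesis .
qed

lemma quad_zero:
  fixes a c :: real
  assumes "c \<ge> 0" "\<And>t. 0 \<le> t * a + t\<^sup>2 * c"
  shows "a = 0"
proof (rule ccontr)
  assume "a \<noteq> 0"
  define t where "t = - a / (c + 1)"
  have "t * a + t\<^sup>2 * c = - a\<^sup>2 / (c+1)\<^sup>2"
  proof -
    have cp: "c + 1 > 0" using assms(1) by simp
    have "t * a + t\<^sup>2 * c = (- a\<^sup>2 * (c+1) + a\<^sup>2 * c) / (c+1)\<^sup>2"
      unfolding t_def using cp by (simp add: power2_eq_square divide_simps)
    also have "\<dots> = - a\<^sup>2 / (c+1)\<^sup>2" by (simp add: algebra_simps)
    finally show ?thesis by simp
  qed
  moreover have "a\<^sup>2 / (c+1)\<^sup>2 > 0" using \<open>a \<noteq> 0\<close> assms(1) by simp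
  ultimately show False using assms(2)[of t] by linarith
qed

lemma key:
  fixes As :: "'m::finite \<Rightarrow> real^'n^'n"
  assumes ymin: "\<forall>z. Lsig As b C s Sk yk Xk \<le> Lsig As b C s Sk z Xk"
    and spos: "s > 0"
  shows "As i \<bullet> Xk = s * (As i \<bullet> (Aadj As yk - Sk - C))"
proof -
  let ?P = "Aadj As yk - Sk - C"
  let ?a = "- (Xk \<bullet> As i) + s * (?P \<bullet> As i)"
  let ?c = "s / 2 * (As i \<bullet> As i)"
  have "0 \<le> t * ?a + t\<^sup>2 * ?c" for t
  proof -
    have "Lsig As b C s Sk yk Xk \<le> Lsig As b C s Sk (yk + t *\<^sub>R axis i 1) Xk"
      using ymin by blast
    moreover have "Aadj As (yk + t *\<^sub>R axis i 1) - Sk - C = ?P + t *\<^sub>R As i"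
      by (simp add: Aadj_add_axis algebra_simps)
    ultimately have "0 \<le> (- (Xk \<bullet> (?P + t *\<^sub>R As i)) + s/2 * ((?P + t *\<^sub>R As i) \<bullet> (?P + t *\<^sub>R As i)))
        - (- (Xk \<bullet> ?P) + s/2 * (?P \<bullet> ?P))"
      unfolding Lsig_def Let_def minner_inner fnorm_sq by simp
    also have "\<dots> = t * ?a + t\<^sup>2 * ?c"
      by (simp add: inner_add_left inner_add_right inner_commute algebra_simps power2_eq_square)
    finally show ?thesis .
  qed
  then have "?a = 0" by (intro quad_zero[of ?c]) (use spos in auto)
  then show ?thesis by (simp add: inner_commute)
qed

theorem lemma3p1:
  fixes As :: "'m::finite \<Rightarrow> real^'n^'n"
    and b :: "real^'m" and C :: "real^'n^'n"
    and \<sigma> :: "nat \<Rightarrow> real"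
    and S :: "nat \<Rightarrow> real^'n^'n" and y :: "nat \<Rightarrow> real^'m" and X :: "nat \<Rightarrow> real^'n^'n"
  assumes symA: "\<And>i. symm (As i)"
    and inv: "invertible (AAadj As)"
    and symC: "symm C"
    and symX0: "symm (X 0)"
    and sig_pos: "\<And>k. \<sigma> k > 0"
    and S_min: "\<And>k. S (Suc k) \<in> elliptope \<and>
                  (\<forall>T\<in>elliptope. Lsig As b C (\<sigma> k) (S (Suc k)) (y k) (X k)
                                   \<le> Lsig As b C (\<sigma> k) T (y k) (X k))"
    and y_min: "\<And>k. \<forall>z. Lsig As b C (\<sigma> k) (S (Suc k)) (y (Suc k)) (X k)
                          \<le> Lsig As b C (\<sigma> k) (S (Suc k)) z (X k)"
    and X_upd: "\<And>k. X (Suc k) = X k - \<sigma> k *\<^sub>R (Aadj As (y (Suc k)) - S (Suc k) - C)"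
  shows "(\<forall>k. Aop As (X (Suc k)) = 0) \<and>
         (\<forall>k\<ge>1. y (Suc k) = matrix_inv (AAadj As) *v Aop As (S (Suc k) + C))"
proof -
  have K: "As i \<bullet> X k = \<sigma> k * (As i \<bullet> (Aadj As (y (Suc k)) - S (Suc k) - C))" for i k
    using key[OF y_min sig_pos] .
  have P1: "Aop As (X (Suc k)) = 0" for k
    unfolding Aop_def minner_inner X_upd
    by (simp add: vec_eq_iff inner_diff_right K)
  have AA: "As i \<bullet> Aadj As v = (AAadj As *v v) $ i" for i v
    unfolding Aadj_def AAadj_def matrix_vector_mult_def minner_inner
    by (simp add: inner_sum_right mult.commute)
  have P2: "y (Suc k) = matrix_inv (AAadj As) *v Aop As (S (Suc k) + C)" if "k \<ge> 1" for k
  proof -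
    define j where "j = k - 1"
    have kj: "k = Suc j" using that j_def by simp
    have "As i \<bullet> X k = 0" for i
      using P1[of j] unfolding kj Aop_def minner_inner by (simp add: vec_eq_iff)
    then have "As i \<bullet> (Aadj As (y (Suc k)) - S (Suc k) - C) = 0" for i
      using K[of i k] sig_pos[of k] by simp
    then have "AAadj As *v y (Suc k) = Aop As (S (Suc k) + C)"
      unfolding Aop_def minner_inner
      by (simp add: vec_eq_iff AA[symmetric] inner_diff_right inner_add_right)
         (metis add.commute diff_eq_eq)
    moreover have "matrix_inv (AAadj As) ** AAadj As = mat 1"
      using inv unfolding invertible_def matrix_inv_def by (rule someI_ex[THEN conjunct2])
    ultimately show ?thesis
      by (metis matrix_vector_mul_assoc matrix_vector_mul_lid)
  qed
  show ?thesis using P1 P2 by blast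
qed

end
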